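(* Let $X$ be a compact Hausdorff space, $\varphi:X\to X$ a continuous surjection, and let $(Y,\psi)$ be a minimal homeomorphism extension of $(X,\varphi)$. Then $(Y,\psi)$ is conjugate to the canonical homeomorphism extension $(\tilde X,\tilde\varphi)$.
   Context: A system $(Y,\psi)$ ($Y$ compact Hausdorff, $\psi$ a continuous surjection) is an extension of $(X,\varphi)$ if there is a continuous surjection $q:Y\to X$ (the extension map) with $q\circ\psi=\varphi\circ q$; if the map is a homeomorphism it is a conjugacy, and the systems are conjugate. A homeomorphism extension is an extension in which $\psi$ is a homeomorphism. The canonical homeomorphism extension: $\tilde X=\{(x_1,x_2,\dots)\in\prod_{n\ge1}X : x_n=\varphi(x_{n+1})\ \forall n\}$ with product topology, $\tilde\varphi(x_1,x_2,\dots)=(\varphi(x_1),x_1,x_2,\dots)$, extension map $p(x_1,x_2,\dots)=x_1$. A homeomorphism extension $(Y,\psi)$ of $(X,\varphi)$ is minimal if whenever $(Z,\sigma)$ is a homeomorphism extension of $(X,\varphi)$ and $(Y,\psi)$ is an extension of $(Z,\sigma)$ such that the composition of the extension map of $Z$ over $X$ with the extension map of $Y$ over $Z$ equals the extension map of $Y$ over $X$, then $(Y,\psi)$ and $(Z,\sigma)$ are conjugate. *)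

theory Defs
  imports "HOL-Analysis.Analysis"
begin

definition tds :: "'a topology \<Rightarrow> ('a \<Rightarrow> 'a) \<Rightarrow> bool" where
  "tds X f \<longleftrightarrow> compact_space X \<and> Hausdorff_space X \<and> continuous_map X X f
      \<and> f ` topspace X = topspace X"

definition is_extension ::
  "'a topology \<Rightarrow> ('a \<Rightarrow> 'a) \<Rightarrow> 'b topology \<Rightarrow> ('b \<Rightarrow> 'b) \<Rightarrow> ('b \<Rightarrow> 'a) \<Rightarrow> bool" where
  "is_extension X f Y g q \<longleftrightarrow> tds X f \<and> tds Y g \<and> continuous_map Y X q
      \<and> q ` topspace Y = topspace X \<and> (\<forall>y\<in>topspace Y. q (g y) = f (q y))"

definition conjugate :: "'a topology \<Rightarrow> ('a \<Rightarrow> 'a) \<Rightarrow> 'b topology \<Rightarrow> ('b \<Rightarrow> 'b) \<Rightarrow> bool" where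
  "conjugate X f Y g \<longleftrightarrow> (\<exists>h. homeomorphic_map X Y h \<and> (\<forall>x\<in>topspace X. h (f x) = g (h x)))"

definition hom_extension ::
  "'a topology \<Rightarrow> ('a \<Rightarrow> 'a) \<Rightarrow> 'b topology \<Rightarrow> ('b \<Rightarrow> 'b) \<Rightarrow> ('b \<Rightarrow> 'a) \<Rightarrow> bool" where
  "hom_extension X f Y g q \<longleftrightarrow> is_extension X f Y g q \<and> homeomorphic_map Y Y g"

text \<open>The intermediate systems (Z,\<sigma>) range over
  spaces carried by the same type as Y (every such Z is a continuous image of Y,
  so this loses no generality up to conjugacy).\<close>
definition minimal_hom_extension ::
  "'a topology \<Rightarrow> ('a \<Rightarrow> 'a) \<Rightarrow> 'b topology \<Rightarrow> ('b \<Rightarrow> 'b) \<Rightarrow> ('b \<Rightarrow> 'a) \<Rightarrow> bool" where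
  "minimal_hom_extension X f Y g q \<longleftrightarrow> hom_extension X f Y g q \<and>
     (\<forall>(Z::'b topology) \<sigma> r s. hom_extension X f Z \<sigma> r \<and> is_extension Z \<sigma> Y g s
        \<and> (\<forall>y\<in>topspace Y. r (s y) = q y) \<longrightarrow> conjugate Y g Z \<sigma>)"

text \<open>Canonical homeomorphism extension (sequences indexed from 0 instead of 1).\<close>
definition canon_carrier :: "'a topology \<Rightarrow> ('a \<Rightarrow> 'a) \<Rightarrow> (nat \<Rightarrow> 'a) set" where
  "canon_carrier X f = {x. (\<forall>n. x n \<in> topspace X) \<and> (\<forall>n. x n = f (x (Suc n)))}"

definition canon_space :: "'a topology \<Rightarrow> ('a \<Rightarrow> 'a) \<Rightarrow> (nat \<Rightarrow> 'a) topology" where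
  "canon_space X f = subtopology (product_topology (\<lambda>_. X) UNIV) (canon_carrier X f)"

definition canon_map :: "('a \<Rightarrow> 'a) \<Rightarrow> (nat \<Rightarrow> 'a) \<Rightarrow> (nat \<Rightarrow> 'a)" where
  "canon_map f x = (\<lambda>n. case n of 0 \<Rightarrow> f (x 0) | Suc m \<Rightarrow> x m)"

definition canon_proj :: "(nat \<Rightarrow> 'a) \<Rightarrow> 'a" where
  "canon_proj x = x 0"

end

theory Submission
  imports Defs
begin

lemma canon_topspace: "topspace (canon_space X f) = canon_carrier X f"
  unfolding canon_space_def canon_carrier_def
  by (auto simp: PiE_def extensional_def)

lemma canon_carrierD:
  assumes "x \<in> canon_carrier X f"
  shows "x n \<in> topspace X" "x n = f (x (Suc n))"
  using assms unfolding canon_carrier_def by blast+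

lemma canon_carrierI:
  assumes "\<And>n. x n \<in> topspace X" "\<And>n. x n = f (x (Suc n))"
  shows "x \<in> canon_carrier X f"
  using assms unfolding canon_carrier_def by blast

lemma canon_map_in:
  assumes "f ` topspace X \<subseteq> topspace X" "x \<in> canon_carrier X f"
  shows "canon_map f x \<in> canon_carrier X f"
proof (rule canon_carrierI)
  fix n
  show "canon_map f x n \<in> topspace X"
  proof (cases n)
    case 0 then show ?thesis using assms(1) canon_carrierD(1)[OF assms(2), of 0] by (auto simp: canon_map_def)
  next
    case (Suc m) then show ?thesis using canon_carrierD(1)[OF assms(2), of m] by (simp add: canon_map_def)
  qed
  show "canon_map f x n = f (canon_map f x (Suc n))"
  proof (cases n)
    case 0 then show ?thesis by (simp add: canon_map_def)
  next
    case (Suc m) then show ?thesis using canon_carrierD(2)[OF assms(2), of m] by (simp add: canon_map_def)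
  qed
qed

lemma proj_cont: "continuous_map (canon_space X f) X (\<lambda>x. x i)"
  unfolding canon_space_def
  by (rule continuous_map_from_subtopology) (use continuous_map_product_projection[of i UNIV "\<lambda>_. X"] in simp)

lemma canon_map_cont:
  assumes "continuous_map X X f"
  shows "continuous_map (canon_space X f) (canon_space X f) (canon_map f)"
proof -
  have im: "f ` topspace X \<subseteq> topspace X" using assms continuous_map_image_subset_topspace by blast
  have "continuous_map (canon_space X f) (product_topology (\<lambda>_. X) UNIV) (canon_map f)"
    unfolding continuous_map_componentwise_UNIV
  proof
    fix k show "continuous_map (canon_space X f) X (\<lambda>x. canon_map f x k)"
    proof (cases k)
      case 0
      then show ?thesis unfolding canon_map_def
        using continuous_map_compose[OF proj_cont[of X f 0] assms] by (simp add: o_def)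
    next
      case (Suc m)
      then show ?thesis unfolding canon_map_def using proj_cont[of X f m] by simp
    qed
  qed
  moreover have "canon_map f ` topspace (canon_space X f) \<subseteq> canon_carrier X f"
    using canon_map_in[OF im] canon_topspace by blast
  ultimately have "continuous_map (canon_space X f) (subtopology (product_topology (\<lambda>_. X) UNIV) (canon_carrier X f)) (canon_map f)"
    by (metis continuous_map_into_subtopology image_subset_iff_funcset)
  then show ?thesis by (simp only: canon_space_def)
qed

lemma shift_cont:
  "continuous_map (canon_space X f) (canon_space X f) (\<lambda>x n. x (Suc n))"
proof -
  have "continuous_map (canon_space X f) (product_topology (\<lambda>_. X) UNIV) (\<lambda>x n. x (Suc n))"
    unfolding continuous_map_componentwise_UNIV using proj_cont by blast
  moreover have "(\<lambda>x n. x (Suc n)) ` topspace (canon_space X f) \<subseteq> canon_carrier X f"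
    unfolding canon_topspace using canon_carrierD by (blast intro: canon_carrierI)
  ultimately have "continuous_map (canon_space X f) (subtopology (product_topology (\<lambda>_. X) UNIV) (canon_carrier X f)) ((\<lambda>x n. x (Suc n)))"
    by (metis continuous_map_into_subtopology image_subset_iff_funcset)
  then show ?thesis by (simp only: canon_space_def)
qed

lemma canon_homeo:
  assumes "continuous_map X X f"
  shows "homeomorphic_map (canon_space X f) (canon_space X f) (canon_map f)"
proof -
  have "homeomorphic_maps (canon_space X f) (canon_space X f) (canon_map f) (\<lambda>x n. x (Suc n))"
    unfolding homeomorphic_maps_def
  proof (intro conjI ballI)
    show "continuous_map (canon_space X f) (canon_space X f) (canon_map f)"
      using canon_map_cont[OF assms] .
    show "continuous_map (canon_space X f) (canon_space X f) (\<lambda>x n. x (Suc n))"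
      using shift_cont .
    fix x assume "x \<in> topspace (canon_space X f)"
    then have x: "x \<in> canon_carrier X f" by (simp add: canon_topspace)
    show "(\<lambda>n. canon_map f x (Suc n)) = x" by (simp add: canon_map_def)
    show "canon_map f (\<lambda>n. x (Suc n)) = x"
    proof
      fix n show "canon_map f (\<lambda>n. x (Suc n)) n = x n"
        using canon_carrierD(2)[OF x, of 0] by (cases n) (auto simp: canon_map_def)
    qed
  qed
  then show ?thesis using homeomorphic_map_maps by blast
qed

lemma canon_compact:
  assumes "compact_space X" "Hausdorff_space X" "continuous_map X X f"
  shows "compact_space (canon_space X f)"
proof -
  let ?P = "product_topology (\<lambda>_::nat. X) UNIV"
  have cP: "compact_space ?P" using assms compact_space_product_topology by blast
  have hP: "Hausdorff_space X" using assms by simp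
  have cl: "closedin ?P {x \<in> topspace ?P. x n = f (x (Suc n))}" for n
  proof (rule closedin_continuous_maps_eq[OF hP])
    show "continuous_map ?P X (\<lambda>x. x n)"
      using continuous_map_product_projection[of n UNIV "\<lambda>_. X"] by simp
    have "continuous_map ?P X (\<lambda>x. x (Suc n))"
      using continuous_map_product_projection[of "Suc n" UNIV "\<lambda>_. X"] by simp
    from continuous_map_compose[OF this assms(3)]
    show "continuous_map ?P X (\<lambda>x. f (x (Suc n)))" by (simp add: o_def)
  qed
  have eq: "canon_carrier X f = topspace ?P \<inter> (\<Inter>n. {x \<in> topspace ?P. x n = f (x (Suc n))})"
    unfolding canon_carrier_def topspace_product_topology PiE_UNIV_domain Pi_iff by blast
  have "closedin ?P (canon_carrier X f)"
  proof -
    have "closedin ?P (\<Inter>n. {x \<in> topspace ?P. x n = f (x (Suc n))})"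
      by (rule closedin_Inter) (use cl in blast)+
    then show ?thesis unfolding eq by (intro closedin_Int closedin_topspace)
  qed
  then show ?thesis unfolding canon_space_def
    by (intro compact_space_subtopology closedin_compact_space[OF cP])
qed

lemma canon_Hausdorff:
  assumes "Hausdorff_space X"
  shows "Hausdorff_space (canon_space X f)"
  unfolding canon_space_def
  by (intro Hausdorff_space_subtopology) (simp add: Hausdorff_space_product_topology assms)

theorem lemma2:
  fixes X :: "'a topology" and \<phi> :: "'a \<Rightarrow> 'a"
    and Y :: "'b topology" and \<psi> :: "'b \<Rightarrow> 'b" and q :: "'b \<Rightarrow> 'a"
  assumes "compact_space X" and "Hausdorff_space X"
    and "continuous_map X X \<phi>" and "\<phi> ` topspace X = topspace X"
    and "minimal_hom_extension X \<phi> Y \<psi> q"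
  shows "conjugate Y \<psi> (canon_space X \<phi>) (canon_map \<phi>)"
proof -
  let ?K = "canon_space X \<phi>"
  let ?C = "canon_carrier X \<phi>"
  have tsK: "topspace ?K = ?C" by (rule canon_topspace)
  have hext: "hom_extension X \<phi> Y \<psi> q" and
    mini: "\<And>(Z::'b topology) sg r s. hom_extension X \<phi> Z sg r \<Longrightarrow> is_extension Z sg Y \<psi> s
        \<Longrightarrow> (\<forall>y\<in>topspace Y. r (s y) = q y) \<Longrightarrow> conjugate Y \<psi> Z sg"
    using assms(5) unfolding minimal_hom_extension_def by blast+
  have ext: "is_extension X \<phi> Y \<psi> q" and hpsi: "homeomorphic_map Y Y \<psi>"
    using hext unfolding hom_extension_def by auto
  have tdsX: "tds X \<phi>" and tdsY: "tds Y \<psi>" and qcont: "continuous_map Y X q"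
    and qsurj: "q ` topspace Y = topspace X" and qeq: "\<And>y. y \<in> topspace Y \<Longrightarrow> q (\<psi> y) = \<phi> (q y)"
    using ext unfolding is_extension_def by auto
  have cY: "compact_space Y" using tdsY unfolding tds_def by auto
  have phi_in: "\<phi> ` topspace X \<subseteq> topspace X" using assms(4) by simp
  obtain g where hm: "homeomorphic_maps Y Y \<psi> g" using hpsi homeomorphic_map_maps by blast
  have gcont1: "continuous_map Y Y g" and psicont: "continuous_map Y Y \<psi>"
    and gY: "\<And>y. y \<in> topspace Y \<Longrightarrow> g y \<in> topspace Y"
    and psiY: "\<And>y. y \<in> topspace Y \<Longrightarrow> \<psi> y \<in> topspace Y"
    and pg: "\<And>y. y \<in> topspace Y \<Longrightarrow> \<psi> (g y) = y"
    and gp: "\<And>y. y \<in> topspace Y \<Longrightarrow> g (\<psi> y) = y"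
    using hm unfolding homeomorphic_maps_def
    by (auto dest: continuous_map_image_subset_topspace)
  have gn: "y \<in> topspace Y \<Longrightarrow> (g^^n) y \<in> topspace Y" for y n
    by (induction n) (auto simp: gY)
  have gcont: "continuous_map Y Y (g^^n)" for n
  proof (induction n)
    case 0 then show ?case by simp
  next
    case (Suc n)
    from continuous_map_compose[OF Suc gcont1] show ?case by (simp add: o_def)
  qed
  define Q where "Q y = (\<lambda>n. q ((g^^n) y))" for y
  have QC: "Q y \<in> ?C" if y: "y \<in> topspace Y" for y
    unfolding canon_carrier_def Q_def
  proof (intro CollectI conjI allI)
    fix n
    show "q ((g ^^ n) y) \<in> topspace X"
      using qcont gn[OF y] by (auto dest: continuous_map_image_subset_topspace)
    have "q ((g ^^ n) y) = q (\<psi> (g ((g^^n) y)))" using pg gn[OF y] by simp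
    also have "\<dots> = \<phi> (q (g ((g^^n) y)))" using qeq gY gn[OF y] by simp
    finally show "q ((g ^^ n) y) = \<phi> (q ((g ^^ Suc n) y))" by simp
  qed
  have Qcont: "continuous_map Y ?K Q"
    unfolding canon_space_def continuous_map_in_subtopology
  proof
    show "continuous_map Y (product_topology (\<lambda>_. X) UNIV) Q"
      unfolding continuous_map_componentwise_UNIV Q_def
      using continuous_map_compose[OF gcont qcont] by (simp add: o_def)
    show "Q \<in> topspace Y \<rightarrow> ?C" using QC by blast
  qed
  have Qeq: "Q (\<psi> y) = canon_map \<phi> (Q y)" if y: "y \<in> topspace Y" for y
  proof
    fix n show "Q (\<psi> y) n = canon_map \<phi> (Q y) n"
    proof (cases n)
      case 0 then show ?thesis by (simp add: Q_def canon_map_def qeq y)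
    next
      case (Suc m)
      have e2: "(g^^Suc m) v = (g^^m) (g v)" for v by (simp add: funpow_Suc_right del: funpow.simps)
      show ?thesis unfolding Suc Q_def canon_map_def nat.case e2 gp[OF y] by (rule refl)
    qed
  qed
  have psin: "(\<psi>^^n) z \<in> topspace Y \<and> (g^^n) ((\<psi>^^n) z) = z" if "z \<in> topspace Y" for z n
  proof (induction n)
    case 0 then show ?case using that by simp
  next
    case (Suc n)
    have w: "(\<psi>^^n) z \<in> topspace Y" using Suc by simp
    have e1: "(\<psi>^^Suc n) z = \<psi> ((\<psi>^^n) z)" by simp
    have e2: "(g^^Suc n) v = (g^^n) (g v)" for v by (simp add: funpow_Suc_right del: funpow.simps)
    show ?case unfolding e1 e2 using Suc w psiY gp by simp
  qed
  have Qsurj: "\<exists>y\<in>topspace Y. Q y = x" if x: "x \<in> ?C" for x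
  proof -
    define A where "A n = {y \<in> topspace Y. q ((g^^n) y) = x n}" for n
    have xX: "x n \<in> topspace X" for n using canon_carrierD(1)[OF x] .
    have cl: "closedin Y (A n)" for n
    proof -
      have c1: "continuous_map Y X (\<lambda>y. q ((g^^n) y))"
        using continuous_map_compose[OF gcont qcont] by (simp add: o_def)
      have c2: "continuous_map Y X (\<lambda>y. x n)" using xX by (simp add: continuous_map_const)
      show ?thesis unfolding A_def by (rule closedin_continuous_maps_eq[OF assms(2) c1 c2])
    qed
    have ne: "A n \<noteq> {}" for n
    proof -
      have "x n \<in> q ` topspace Y" using qsurj xX by simp
      then obtain z where z0: "x n = q z" "z \<in> topspace Y" by (rule imageE)
      then have z: "z \<in> topspace Y" "q z = x n" by simp_all
      have "(\<psi>^^n) z \<in> A n" unfolding A_def using psin[OF z(1), of n] z(2) by simp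
      then show ?thesis by blast
    qed
    have dec: "decseq A"
    proof (rule decseq_SucI)
      fix n show "A (Suc n) \<subseteq> A n"
      proof
        fix y assume "y \<in> A (Suc n)"
        then have y: "y \<in> topspace Y" "q ((g^^Suc n) y) = x (Suc n)" unfolding A_def by auto
        have "x n = \<phi> (x (Suc n))" using canon_carrierD(2)[OF x] .
        also have "\<dots> = \<phi> (q (g ((g^^n) y)))" using y by simp
        also have "\<dots> = q (\<psi> (g ((g^^n) y)))" using qeq gY gn y by simp
        also have "\<dots> = q ((g^^n) y)" using pg gn y by simp
        finally show "y \<in> A n" using y unfolding A_def by simp
      qed
    qed
    obtain y where "y \<in> (\<Inter>n. A n)" using compact_space_imp_nest[OF cY cl ne dec] by blast
    then show ?thesis unfolding A_def Q_def by auto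
  qed
  define e where "e x = (SOME y. y \<in> topspace Y \<and> Q y = x)" for x
  have eprop: "e x \<in> topspace Y \<and> Q (e x) = x" if "x \<in> ?C" for x
    unfolding e_def using Qsurj[OF that] by (rule someI2_bex) auto
  define A where "A = e ` ?C"
  define Z where "Z = pullback_topology A Q ?K"
  have tsZ: "topspace Z = A"
    unfolding Z_def topspace_pullback_topology A_def tsK using eprop by auto
  have eQ: "e (Q a) = a" if "a \<in> A" for a
    using that eprop unfolding A_def by auto
  have QeC: "Q a \<in> ?C" if "a \<in> A" for a using that eprop unfolding A_def by auto
  have hmZ: "homeomorphic_maps Z ?K Q e"
    unfolding homeomorphic_maps_def
  proof (intro conjI ballI)
    show "continuous_map Z ?K Q"
      unfolding Z_def using continuous_map_pullback[OF continuous_map_id, of A Q ?K] by simp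
    have "continuous_map ?K ?K (Q \<circ> e)"
      by (rule continuous_map_eq[OF continuous_map_id]) (use eprop tsK in auto)
    then show "continuous_map ?K Z e"
      unfolding Z_def by (rule continuous_map_pullback') (auto simp: tsK A_def)
    show "e (Q a) = a" if "a \<in> topspace Z" for a using that tsZ eQ by simp
    show "Q (e x) = x" if "x \<in> topspace ?K" for x using that tsK eprop by simp
  qed
  have hQ: "homeomorphic_map Z ?K Q" and he: "homeomorphic_map ?K Z e"
    using hmZ homeomorphic_maps_map by blast+
  have Qcz: "continuous_map Z ?K Q" and ecz: "continuous_map ?K Z e"
    using hmZ unfolding homeomorphic_maps_def by auto
  define sg where "sg = e \<circ> canon_map \<phi> \<circ> Q"
  define r where "r = canon_proj \<circ> Q"
  define s where "s = e \<circ> Q"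
  have hsg: "homeomorphic_map Z Z sg"
    using homeomorphic_map_compose[OF homeomorphic_map_compose[OF hQ canon_homeo[OF assms(3)]] he]
    unfolding sg_def by (simp only: comp_assoc)
  have ZK: "Z homeomorphic_space ?K" using hmZ homeomorphic_space_def by blast
  have tdsZ: "tds Z sg"
    unfolding tds_def
    using homeomorphic_compact_space[OF ZK] homeomorphic_Hausdorff_space[OF ZK]
      canon_compact[OF assms(1-3)] canon_Hausdorff[OF assms(2)] hsg
      homeomorphic_imp_continuous_map homeomorphic_imp_surjective_map by blast
  have rcont: "continuous_map Z X r"
    unfolding r_def canon_proj_def using continuous_map_compose[OF Qcz proj_cont[of X \<phi> 0]]
    by (simp add: o_def)
  have rsurj: "r ` topspace Z = topspace X"
  proof
    show "r ` topspace Z \<subseteq> topspace X"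
      using QeC tsZ canon_carrierD(1)[of _ X \<phi> 0] by (auto simp: r_def canon_proj_def)
    show "topspace X \<subseteq> r ` topspace Z"
    proof
      fix x assume "x \<in> topspace X"
      then obtain y where y: "y \<in> topspace Y" "x = q y" using qsurj by blast
      have "e (Q y) \<in> A" using QC[OF y(1)] A_def by blast
      moreover have "r (e (Q y)) = x" using eprop QC y by (simp add: r_def canon_proj_def Q_def)
      ultimately show "x \<in> r ` topspace Z" using tsZ by blast
    qed
  qed
  have req: "r (sg z) = \<phi> (r z)" if "z \<in> topspace Z" for z
  proof -
    have "canon_map \<phi> (Q z) \<in> ?C" using canon_map_in[OF phi_in QeC] that tsZ by simp
    then show ?thesis using eprop by (simp add: r_def sg_def canon_proj_def canon_map_def)
  qed
  have H1: "hom_extension X \<phi> Z sg r"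
    unfolding hom_extension_def is_extension_def using tdsX tdsZ rcont rsurj req hsg by blast
  have scont: "continuous_map Y Z s" unfolding s_def using continuous_map_compose[OF Qcont ecz] .
  have QY: "Q ` topspace Y = ?C" using QC Qsurj by blast
  have ssurj: "s ` topspace Y = topspace Z" unfolding s_def tsZ A_def using QY image_comp[of e Q "topspace Y"] by (simp add: o_def)
  have seq: "s (\<psi> y) = sg (s y)" if y: "y \<in> topspace Y" for y
    using eprop QC[OF y] by (simp add: s_def sg_def Qeq y)
  have H2: "is_extension Z sg Y \<psi> s"
    unfolding is_extension_def using tdsZ tdsY scont ssurj seq by auto
  have H3: "\<forall>y\<in>topspace Y. r (s y) = q y"
    using eprop QC by (simp add: r_def s_def canon_proj_def Q_def)
  have "conjugate Y \<psi> Z sg" using mini[OF H1 H2 H3] .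
  then obtain h where h: "homeomorphic_map Y Z h" and heq: "\<forall>y\<in>topspace Y. h (\<psi> y) = sg (h y)"
    unfolding conjugate_def by blast
  have hZ: "h y \<in> topspace Z" if "y \<in> topspace Y" for y
    using h that homeomorphic_imp_surjective_map by blast
  show ?thesis unfolding conjugate_def
  proof (intro exI conjI ballI)
    show "homeomorphic_map Y ?K (Q \<circ> h)" using homeomorphic_map_compose[OF h hQ] .
    fix y assume y: "y \<in> topspace Y"
    have "canon_map \<phi> (Q (h y)) \<in> ?C" using canon_map_in[OF phi_in QeC] hZ[OF y] tsZ by simp
    then show "(Q \<circ> h) (\<psi> y) = canon_map \<phi> ((Q \<circ> h) y)"
      using heq y eprop by (simp add: sg_def)
  qed
qed

end
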